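(* Under the hypotheses of the context, for every $T\ge1$, $$\sum_{t=0}^{T-1}\mathbb E\|x^t-\hat x^t\|^2\le\eta_g^2\Big(\sum_{s=1}^{T-1}(1-\delta_s)^s\Big)\sum_{t=0}^{T-2}\mathbb E\|\bar\Delta^t\|^2 .$$
   Context: A (possibly random) map $Q:\mathbb R^d\to\mathbb R^d$ is a quantizer with compression parameter $\delta\in(0,1]$ if $\mathbb E_Q\|Q(x)-x\|^2\le(1-\delta)\|x\|^2$ for all $x$, where $\mathbb E_Q$ is expectation over the internal randomness of $Q$; it is unbiased if $\mathbb E_Q[Q(x)]=x$ for all $x$. Hypotheses: $Q_s$ is an unbiased quantizer with parameter $\delta_s\in(0,1]$, $\eta_g>0$, $(\bar\Delta^t)_{t\ge0}$ are random vectors in $\mathbb R^d$ with finite second moments, $x^{t+1}=x^t+\eta_g\bar\Delta^t$, $\hat x^{t+1}=\hat x^t+Q_s(x^{t+1}-\hat x^t)$, $\hat x^0=x^0$, each application of $Q_s$ uses fresh internal randomness independent of $x^{t+1}-\hat x^t$, and $\mathbb E\langle x^t-\hat x^t,\bar\Delta^t\rangle=0$ for all $t$. *)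

theory Defs
  imports "HOL-Probability.Probability"
begin

text \<open>A random map Q : R^d -> R^d is modelled as a jointly measurable function
  of an internal randomness r (distributed according to the probability measure N)
  and the input x.\<close>

definition quantizer :: "'r measure \<Rightarrow> ('r \<Rightarrow> 'a::euclidean_space \<Rightarrow> 'a) \<Rightarrow> real \<Rightarrow> bool" where
  "quantizer N Q \<delta> \<longleftrightarrow>
     prob_space N \<and>
     (\<lambda>(r, x). Q r x) \<in> borel_measurable (N \<Otimes>\<^sub>M borel) \<and>
     0 < \<delta> \<and> \<delta> \<le> 1 \<and>
     (\<forall>x. (\<integral>\<^sup>+ r. ennreal ((norm (Q r x - x))\<^sup>2) \<partial>N) \<le> ennreal ((1 - \<delta>) * (norm x)\<^sup>2))"

definition unbiased_quantizer :: "'r measure \<Rightarrow> ('r \<Rightarrow> 'a::euclidean_space \<Rightarrow> 'a) \<Rightarrow> bool" where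
  "unbiased_quantizer N Q \<longleftrightarrow>
     (\<forall>x. integrable N (\<lambda>r. Q r x) \<and> (\<integral>r. Q r x \<partial>N) = x)"

end

theory Submission imports Defs begin

lemma rec_bound:
  fixes a E :: "nat \<Rightarrow> real" and q :: real
  assumes q: "0 \<le> q" and a0: "a 0 = 0"
    and st: "\<And>t. a (Suc t) \<le> q * (a t + E t)"
  shows "a t \<le> (\<Sum>j<t. q ^ (t - j) * E j)"
proof (induction t)
  case 0 then show ?case using a0 by simp
next
  case (Suc t)
  have "a (Suc t) \<le> q * (a t + E t)" by (rule st)
  also have "\<dots> \<le> q * ((\<Sum>j<t. q ^ (t - j) * E j) + E t)"
    using Suc q by (intro mult_left_mono) auto
  also have "\<dots> = (\<Sum>j<t. q ^ (Suc t - j) * E j) + q ^ (Suc t - t) * E t"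
    by (simp add: sum_distrib_left distrib_left Suc_diff_le mult.assoc)
  also have "\<dots> = (\<Sum>j<Suc t. q ^ (Suc t - j) * E j)" by simp
  finally show ?case .
qed

lemma swap_bound:
  fixes E :: "nat \<Rightarrow> real" and q :: real
  assumes q: "0 \<le> q" and E: "\<And>j. 0 \<le> E j" and T: "T \<ge> 1"
  shows "(\<Sum>t<T. \<Sum>j<t. q ^ (t - j) * E j) \<le> (\<Sum>s=1..T-1. q ^ s) * (\<Sum>j<T-1. E j)"
proof -
  define c where "c j = (\<Sum>t\<in>{j<..<T}. q ^ (t - j))" for j
  have aux: "(\<Sum>j<t. q ^ (t - j) * E j) = (\<Sum>j<T. if j < t then q ^ (t - j) * E j else 0)"
    if "t \<in> {..<T}" for t
  proof -
    from that have "{..<T} \<inter> {j. j < t} = {..<t}" by auto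
    then show ?thesis by (simp add: sum.If_cases)
  qed
  have "(\<Sum>t<T. \<Sum>j<t. q ^ (t - j) * E j) = (\<Sum>t<T. \<Sum>j<T. if j < t then q ^ (t - j) * E j else 0)"
    by (rule sum.cong[OF refl], rule aux)
  also have "\<dots> = (\<Sum>j<T. \<Sum>t<T. if j < t then q ^ (t - j) * E j else 0)"
    by (rule sum.swap)
  also have "\<dots> = (\<Sum>j<T. c j * E j)"
  proof (intro sum.cong refl)
    fix j assume "j \<in> {..<T}"
    have "{..<T} \<inter> {t. j < t} = {j<..<T}" by auto
    then show "(\<Sum>t<T. if j < t then q ^ (t - j) * E j else 0) = c j * E j"
      by (simp add: sum.If_cases c_def sum_distrib_right)
  qed
  also have "\<dots> = (\<Sum>j<T-1. c j * E j) + c (T-1) * E (T-1)"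
    using T by (metis Suc_diff_1 less_le_trans zero_less_one sum.lessThan_Suc)
  also have "c (T-1) = 0" unfolding c_def using T by auto
  also have "(\<Sum>j<T-1. c j * E j) + 0 * E (T-1) \<le> (\<Sum>j<T-1. (\<Sum>s=1..T-1. q ^ s) * E j)"
  proof -
    have "c j \<le> (\<Sum>s=1..T-1. q ^ s)" for j
    proof -
      have inj: "inj_on (\<lambda>t. t - j) {j<..<T}" by (auto simp: inj_on_def)
      have "c j = (\<Sum>s\<in>(\<lambda>t. t - j) ` {j<..<T}. q ^ s)"
        unfolding c_def by (simp add: sum.reindex[OF inj])
      also have "\<dots> \<le> (\<Sum>s=1..T-1. q ^ s)"
        by (rule sum_mono2) (auto simp: q)
      finally show ?thesis .
    qed
    then show ?thesis by (auto intro!: sum_mono mult_right_mono E)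
  qed
  finally show ?thesis by (simp add: sum_distrib_left)
qed

theorem mainTheorem9:
  fixes M :: "'w measure" and N :: "'r measure"
    and Qs :: "'r \<Rightarrow> 'a::euclidean_space \<Rightarrow> 'a"
    and \<delta>s \<eta>g :: real
    and \<Delta> x xh :: "nat \<Rightarrow> 'w \<Rightarrow> 'a"
    and \<xi> :: "nat \<Rightarrow> 'w \<Rightarrow> 'r"
    and T :: nat
  assumes "prob_space M"
    and "quantizer N Qs \<delta>s" and "unbiased_quantizer N Qs"
    and "\<eta>g > 0"
    and "\<forall>t. \<Delta> t \<in> borel_measurable M \<and> integrable M (\<lambda>\<omega>. (norm (\<Delta> t \<omega>))\<^sup>2)"
    and "\<forall>t \<omega>. x (Suc t) \<omega> = x t \<omega> + \<eta>g *\<^sub>R \<Delta> t \<omega>"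
    and "\<forall>t \<omega>. xh (Suc t) \<omega> = xh t \<omega> + Qs (\<xi> t \<omega>) (x (Suc t) \<omega> - xh t \<omega>)"
    and "\<forall>\<omega>. xh 0 \<omega> = x 0 \<omega>"
    and "\<forall>t. \<xi> t \<in> measurable M N \<and> distr M N (\<xi> t) = N"
    and "\<forall>t. (\<lambda>\<omega>. x (Suc t) \<omega> - xh t \<omega>) \<in> borel_measurable M"
    and "\<forall>t. distr M (N \<Otimes>\<^sub>M borel) (\<lambda>\<omega>. (\<xi> t \<omega>, x (Suc t) \<omega> - xh t \<omega>))
             = N \<Otimes>\<^sub>M distr M borel (\<lambda>\<omega>. x (Suc t) \<omega> - xh t \<omega>)"
    and "\<forall>t. (\<integral>\<omega>. inner (x t \<omega> - xh t \<omega>) (\<Delta> t \<omega>) \<partial>M) = 0"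
    and "T \<ge> 1"
  shows "(\<Sum>t<T. \<integral>\<omega>. (norm (x t \<omega> - xh t \<omega>))\<^sup>2 \<partial>M)
           \<le> \<eta>g\<^sup>2 * (\<Sum>s=1..T-1. (1 - \<delta>s) ^ s) * (\<Sum>t<T-1. \<integral>\<omega>. (norm (\<Delta> t \<omega>))\<^sup>2 \<partial>M)"
proof -
  note A = assms
  interpret M: prob_space M by (rule A(1))
  from A(2) have probN: "prob_space N"
    and Qm: "(\<lambda>(r, y). Qs r y) \<in> borel_measurable (N \<Otimes>\<^sub>M borel)"
    and d0: "0 < \<delta>s" and d1: "\<delta>s \<le> 1"
    and QB: "\<And>y. (\<integral>\<^sup>+ r. ennreal ((norm (Qs r y - y))\<^sup>2) \<partial>N) \<le> ennreal ((1 - \<delta>s) * (norm y)\<^sup>2)"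
    unfolding quantizer_def by auto
  define q where "q = 1 - \<delta>s"
  have q0: "0 \<le> q" using d1 by (simp add: q_def)
  define e where "e t \<omega> = x t \<omega> - xh t \<omega>" for t \<omega>
  define v where "v t = (\<lambda>\<omega>. x (Suc t) \<omega> - xh t \<omega>)" for t
  define a where "a t = (\<integral>\<omega>. (norm (e t \<omega>))\<^sup>2 \<partial>M)" for t
  define D where "D t = (\<integral>\<omega>. (norm (\<Delta> t \<omega>))\<^sup>2 \<partial>M)" for t
  have Dm: "\<Delta> t \<in> borel_measurable M" and Di: "integrable M (\<lambda>\<omega>. (norm (\<Delta> t \<omega>))\<^sup>2)" for t
    using A(5) by auto
  have vm: "v t \<in> borel_measurable M" for t using A(10) unfolding v_def by simp
  have \<xi>m: "\<xi> t \<in> measurable M N" for t using A(9) by auto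
  have ve: "v t \<omega> = e t \<omega> + \<eta>g *\<^sub>R \<Delta> t \<omega>" for t \<omega>
    using A(6) by (simp add: v_def e_def algebra_simps)
  have eS: "e (Suc t) \<omega> = v t \<omega> - Qs (\<xi> t \<omega>) (v t \<omega>)" for t \<omega>
    using A(7) by (simp add: v_def e_def algebra_simps)
  have e0: "e 0 \<omega> = 0" for \<omega> using A(8) by (simp add: e_def)
  have em: "e t \<in> borel_measurable M" for t
  proof (cases t)
    case 0 have "e 0 = (\<lambda>_. 0)" using e0 by auto
    then show ?thesis using 0 by simp
  next
    case (Suc s)
    have "(\<lambda>\<omega>. (\<xi> s \<omega>, v s \<omega>)) \<in> measurable M (N \<Otimes>\<^sub>M borel)"
      using \<xi>m vm by (rule measurable_Pair)
    from measurable_comp[OF this Qm]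
    have "(\<lambda>\<omega>. Qs (\<xi> s \<omega>) (v s \<omega>)) \<in> borel_measurable M" by (simp add: o_def)
    then have "(\<lambda>\<omega>. v s \<omega> - Qs (\<xi> s \<omega>) (v s \<omega>)) \<in> borel_measurable M"
      using vm by measurable
    moreover have "e (Suc s) = (\<lambda>\<omega>. v s \<omega> - Qs (\<xi> s \<omega>) (v s \<omega>))" using eS by auto
    ultimately show ?thesis using Suc by simp
  qed
  have key: "(\<integral>\<^sup>+\<omega>. ennreal ((norm (e (Suc t) \<omega>))\<^sup>2) \<partial>M)
      \<le> (\<integral>\<^sup>+\<omega>. ennreal (q * (norm (v t \<omega>))\<^sup>2) \<partial>M)" for t
  proof -
    define f where "f p = ennreal ((norm (snd p - Qs (fst p) (snd p)))\<^sup>2)" for p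
    have fm: "f \<in> borel_measurable (N \<Otimes>\<^sub>M borel)"
    proof -
      have "(\<lambda>p. Qs (fst p) (snd p)) \<in> borel_measurable (N \<Otimes>\<^sub>M borel)"
        using Qm by (simp add: case_prod_beta')
      then show ?thesis unfolding f_def by measurable
    qed
    have pm: "(\<lambda>\<omega>. (\<xi> t \<omega>, v t \<omega>)) \<in> measurable M (N \<Otimes>\<^sub>M borel)"
      using \<xi>m vm by (rule measurable_Pair)
    interpret DV: prob_space "distr M borel (v t)" by (rule M.prob_space_distr[OF vm])
    interpret NN: prob_space N by (rule probN)
    interpret PS: pair_sigma_finite N "distr M borel (v t)"
      by (rule pair_sigma_finite.intro) (rule NN.sigma_finite_measure_axioms, rule DV.sigma_finite_measure_axioms)
    have "(\<integral>\<^sup>+\<omega>. ennreal ((norm (e (Suc t) \<omega>))\<^sup>2) \<partial>M) = (\<integral>\<^sup>+\<omega>. f (\<xi> t \<omega>, v t \<omega>) \<partial>M)"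
      by (simp add: f_def eS)
    also have "\<dots> = integral\<^sup>N (distr M (N \<Otimes>\<^sub>M borel) (\<lambda>\<omega>. (\<xi> t \<omega>, v t \<omega>))) f"
      by (rule nn_integral_distr[symmetric]) (use pm fm in auto)
    also have "\<dots> = integral\<^sup>N (N \<Otimes>\<^sub>M distr M borel (v t)) f"
      using A(11) by (simp add: v_def)
    also have "\<dots> = (\<integral>\<^sup>+ y. (\<integral>\<^sup>+ r. f (r, y) \<partial>N) \<partial>distr M borel (v t))"
      by (rule PS.nn_integral_snd[symmetric]) (use fm in simp)
    also have "\<dots> \<le> (\<integral>\<^sup>+ y. ennreal (q * (norm y)\<^sup>2) \<partial>distr M borel (v t))"
    proof (rule nn_integral_mono)
      fix y
      have "(\<integral>\<^sup>+ r. f (r, y) \<partial>N) = (\<integral>\<^sup>+ r. ennreal ((norm (Qs r y - y))\<^sup>2) \<partial>N)"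
        by (simp add: f_def norm_minus_commute)
      also have "\<dots> \<le> ennreal (q * (norm y)\<^sup>2)" using QB by (simp add: q_def)
      finally show "(\<integral>\<^sup>+ r. f (r, y) \<partial>N) \<le> ennreal (q * (norm y)\<^sup>2)" .
    qed
    also have "\<dots> = (\<integral>\<^sup>+\<omega>. ennreal (q * (norm (v t \<omega>))\<^sup>2) \<partial>M)"
      by (rule nn_integral_distr) (use vm in auto)
    finally show ?thesis .
  qed
  have step: "integrable M (\<lambda>\<omega>. (norm (e (Suc t) \<omega>))\<^sup>2) \<and> a (Suc t) \<le> q * (a t + \<eta>g\<^sup>2 * D t)"
    if ei: "integrable M (\<lambda>\<omega>. (norm (e t \<omega>))\<^sup>2)" for t
  proof -
    have inm: "(\<lambda>\<omega>. inner (e t \<omega>) (\<Delta> t \<omega>)) \<in> borel_measurable M"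
      using em Dm by measurable
    have ini: "integrable M (\<lambda>\<omega>. inner (e t \<omega>) (\<Delta> t \<omega>))"
    proof (rule Bochner_Integration.integrable_bound[OF Bochner_Integration.integrable_add[OF ei Di[of t]] inm], rule AE_I2)
      fix \<omega>
      have "\<bar>inner (e t \<omega>) (\<Delta> t \<omega>)\<bar> \<le> norm (e t \<omega>) * norm (\<Delta> t \<omega>)"
        by (rule Cauchy_Schwarz_ineq2)
      also have "\<dots> \<le> (norm (e t \<omega>))\<^sup>2 + (norm (\<Delta> t \<omega>))\<^sup>2"
        using sum_squares_bound[of "norm (e t \<omega>)" "norm (\<Delta> t \<omega>)"]
          mult_nonneg_nonneg[OF norm_ge_zero norm_ge_zero, of "e t \<omega>" "\<Delta> t \<omega>"] by linarith
      finally show "norm (inner (e t \<omega>) (\<Delta> t \<omega>)) \<le> norm ((norm (e t \<omega>))\<^sup>2 + (norm (\<Delta> t \<omega>))\<^sup>2)"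
        by simp
    qed
    have vsq: "(norm (v t \<omega>))\<^sup>2 = (norm (e t \<omega>))\<^sup>2 + 2 * \<eta>g * inner (e t \<omega>) (\<Delta> t \<omega>) + \<eta>g\<^sup>2 * (norm (\<Delta> t \<omega>))\<^sup>2" for \<omega>
    proof -
      have "(norm (e t \<omega> + \<eta>g *\<^sub>R \<Delta> t \<omega>))\<^sup>2 = inner (e t \<omega> + \<eta>g *\<^sub>R \<Delta> t \<omega>) (e t \<omega> + \<eta>g *\<^sub>R \<Delta> t \<omega>)"
        by (rule power2_norm_eq_inner)
      also have "\<dots> = inner (e t \<omega>) (e t \<omega>) + 2 * \<eta>g * inner (e t \<omega>) (\<Delta> t \<omega>) + \<eta>g\<^sup>2 * inner (\<Delta> t \<omega>) (\<Delta> t \<omega>)"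
        by (simp add: inner_add_left inner_add_right inner_commute[of "\<Delta> t \<omega>" "e t \<omega>"] power2_eq_square algebra_simps)
      finally show ?thesis by (simp add: power2_norm_eq_inner ve)
    qed
    have vi: "integrable M (\<lambda>\<omega>. (norm (v t \<omega>))\<^sup>2)"
      unfolding vsq using ei ini Di[of t] by auto
    have vint: "(\<integral>\<omega>. (norm (v t \<omega>))\<^sup>2 \<partial>M) = a t + \<eta>g\<^sup>2 * D t"
    proof -
      have "(\<integral>\<omega>. (norm (v t \<omega>))\<^sup>2 \<partial>M) = (\<integral>\<omega>. (norm (e t \<omega>))\<^sup>2 \<partial>M) + 2 * \<eta>g * (\<integral>\<omega>. inner (e t \<omega>) (\<Delta> t \<omega>) \<partial>M) + \<eta>g\<^sup>2 * D t"
        unfolding vsq D_def using ei ini Di[of t] by simp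
      moreover have "(\<integral>\<omega>. inner (e t \<omega>) (\<Delta> t \<omega>) \<partial>M) = 0"
        using A(12) by (simp add: e_def)
      ultimately show ?thesis by (simp add: a_def)
    qed
    have qvi: "integrable M (\<lambda>\<omega>. q * (norm (v t \<omega>))\<^sup>2)" using vi by simp
    have eq: "(\<integral>\<^sup>+\<omega>. ennreal (q * (norm (v t \<omega>))\<^sup>2) \<partial>M) = ennreal (q * (a t + \<eta>g\<^sup>2 * D t))"
      by (subst nn_integral_eq_integral[OF qvi]) (use q0 vint in auto)
    have bnd: "(\<integral>\<^sup>+\<omega>. ennreal ((norm (e (Suc t) \<omega>))\<^sup>2) \<partial>M) \<le> ennreal (q * (a t + \<eta>g\<^sup>2 * D t))"
      using key[of t] eq by simp
    have esi: "integrable M (\<lambda>\<omega>. (norm (e (Suc t) \<omega>))\<^sup>2)"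
      by (rule integrableI_nonneg) (use em[of "Suc t"] bnd in \<open>auto simp: top.not_eq_extremum intro: le_less_trans\<close>)
    have "ennreal (a (Suc t)) = (\<integral>\<^sup>+\<omega>. ennreal ((norm (e (Suc t) \<omega>))\<^sup>2) \<partial>M)"
      unfolding a_def by (rule nn_integral_eq_integral[OF esi, symmetric]) auto
    with bnd have "ennreal (a (Suc t)) \<le> ennreal (q * (a t + \<eta>g\<^sup>2 * D t))" by simp
    moreover have "0 \<le> q * (a t + \<eta>g\<^sup>2 * D t)"
      using q0 vint integral_nonneg_AE[of "\<lambda>\<omega>. (norm (v t \<omega>))\<^sup>2" M] by auto
    ultimately have "a (Suc t) \<le> q * (a t + \<eta>g\<^sup>2 * D t)" by (simp add: ennreal_le_iff)
    with esi show ?thesis by simp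
  qed
  have integ: "integrable M (\<lambda>\<omega>. (norm (e t \<omega>))\<^sup>2)" for t
  proof (induction t)
    case 0 then show ?case by (simp add: e0)
  next
    case (Suc t) then show ?case using step by blast
  qed
  have rec: "a (Suc t) \<le> q * (a t + \<eta>g\<^sup>2 * D t)" for t using step integ by blast
  have a0: "a 0 = 0" by (simp add: a_def e0)
  have Dnn: "0 \<le> \<eta>g\<^sup>2 * D j" for j unfolding D_def by simp
  have "(\<Sum>t<T. a t) \<le> (\<Sum>t<T. \<Sum>j<t. q ^ (t - j) * (\<eta>g\<^sup>2 * D j))"
    by (rule sum_mono, rule rec_bound[OF q0 a0 rec])
  also have "\<dots> \<le> (\<Sum>s=1..T-1. q ^ s) * (\<Sum>j<T-1. \<eta>g\<^sup>2 * D j)"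
    by (rule swap_bound[OF q0 Dnn A(13)])
  also have "(\<Sum>j<T-1. \<eta>g\<^sup>2 * D j) = \<eta>g\<^sup>2 * (\<Sum>j<T-1. D j)"
    by (rule sum_distrib_left[symmetric])
  finally have "(\<Sum>t<T. a t) \<le> \<eta>g\<^sup>2 * (\<Sum>s=1..T-1. q ^ s) * (\<Sum>j<T-1. D j)"
    by (simp only: mult.assoc mult.left_commute)
  then show ?thesis unfolding a_def D_def e_def q_def .
qed

end
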